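(* Let $\lambda\in\mathbb{C}$, let $C$ be a path, and let $f$ be a function such that all Jackson integrals below converge and all boundary values below exist. Write $K_\lambda(t,x)=\dfrac{(q^{1-\lambda}t/x)_\infty}{(qt/x)_\infty}$. Then $$E_{\lambda;C}[T f](x)=q^{-\lambda-1}\,T_x E_{\lambda;C}[f](x)-x^\lambda\,\frac{1-q}{q}\left[t\,\frac{1-q^{-\lambda}t/x}{1-t/x}\,f(t)\,K_\lambda(t,x)\right]_{t\in\partial C},$$ $$E_{\lambda;C}[D f](x)=q^{-\lambda}\,D_x E_{\lambda;C}[f](x)+x^\lambda\left[\frac{1-q^{-\lambda}t/x}{1-t/x}\,f(t)\,K_\lambda(t,x)\right]_{t\in\partial C},$$ where $Tf$ denotes the function $t\mapsto f(qt)$ and $Df$ denotes the function $t\mapsto \frac{f(t)-f(qt)}{(1-q)t}$.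
   Context: Fix $q\in\mathbb{C}$ with $0<|q|<1$. For a function $f$ of $x$: $T_xf(x)=f(qx)$, $D_xf(x)=\frac{f(x)-f(qx)}{(1-q)x}$. $(a)_\infty=\prod_{k\ge0}(1-aq^k)$. $x^\lambda$ denotes a fixed branch with $T_x x^\lambda=q^\lambda x^\lambda$. Jackson integrals: $\int_0^\tau f(t)d_qt=(1-q)\sum_{n\ge0}f(\tau q^n)\tau q^n$ for $\tau\in\mathbb{C}$; $\int_0^{\tau\infty}f(t)d_qt=(1-q)\sum_{n\in\mathbb{Z}}f(\tau q^n)\tau q^n$; for $\tau_1,\tau_2\in\mathbb{C}\cup\mathbb{C}\infty$, $\int_{[\tau_1,\tau_2]}=\int_{[0,\tau_2]}-\int_{[0,\tau_1]}$. A path is a formal linear combination $C=\sum a_iC_i$ of such intervals, with $\int_C=\sum a_i\int_{C_i}$. Boundary values: $[F(t)]_{t\in\partial[\tau_1,\tau_2]}=F(\tau_2)-F(\tau_1)$, extended linearly to paths, where $F(\tau\infty)=\lim_{n\to-\infty}F(\tau q^n)$ and $F(0)$ means $\lim_{n\to+\infty}F(\tau q^n)$. The $q$-Euler type integral transformation is $E_{\lambda;C}[f](x)=x^\lambda\int_C f(t)\,\frac{(q^{1-\lambda}t/x)_\infty}{(qt/x)_\infty}\,d_qt$. *)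

theory Defs
  imports "HOL-Analysis.Analysis"
begin

definition qpoch :: "complex \<Rightarrow> complex \<Rightarrow> complex" where
  "qpoch q a = (\<Prod>k. 1 - a * q ^ k)"

text \<open>Powers of q are taken w.r.t. a fixed logarithm ell of q (exp ell = q):
  q^s := exp (s * ell).\<close>
definition qpow :: "complex \<Rightarrow> complex \<Rightarrow> complex" where
  "qpow ell s = exp (s * ell)"

definition qK :: "complex \<Rightarrow> complex \<Rightarrow> complex \<Rightarrow> complex \<Rightarrow> complex \<Rightarrow> complex" where
  "qK q ell lam t x = qpoch q (qpow ell (1 - lam) * t / x) / qpoch q (q * t / x)"

definition qT :: "complex \<Rightarrow> (complex \<Rightarrow> complex) \<Rightarrow> complex \<Rightarrow> complex" where
  "qT q f t = f (q * t)"

definition qD :: "complex \<Rightarrow> (complex \<Rightarrow> complex) \<Rightarrow> complex \<Rightarrow> complex" where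
  "qD q f t = (f t - f (q * t)) / ((1 - q) * t)"

text \<open>Basic intervals: Fin_pt tau = [0,tau], Inf_pt tau = [0, tau infinity].
  A path is a formal linear combination (list of coefficient/basic interval pairs);
  [tau1,tau2] is represented as [0,tau2] - [0,tau1].\<close>
datatype qendpt = Fin_pt complex | Inf_pt complex

type_synonym qpath = "(complex \<times> qendpt) list"

fun jint :: "complex \<Rightarrow> (complex \<Rightarrow> complex) \<Rightarrow> qendpt \<Rightarrow> complex" where
  "jint q g (Fin_pt \<tau>) = (1 - q) * (\<Sum>n. g (\<tau> * q ^ n) * (\<tau> * q ^ n))"
| "jint q g (Inf_pt \<tau>) = (1 - q) * ((\<Sum>n. g (\<tau> * q ^ n) * (\<tau> * q ^ n))
      + (\<Sum>n. g (\<tau> * inverse q ^ Suc n) * (\<tau> * inverse q ^ Suc n)))"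

fun jconv :: "complex \<Rightarrow> (complex \<Rightarrow> complex) \<Rightarrow> qendpt \<Rightarrow> bool" where
  "jconv q g (Fin_pt \<tau>) = summable (\<lambda>n. g (\<tau> * q ^ n) * (\<tau> * q ^ n))"
| "jconv q g (Inf_pt \<tau>) = (summable (\<lambda>n. g (\<tau> * q ^ n) * (\<tau> * q ^ n))
      \<and> summable (\<lambda>n. g (\<tau> * inverse q ^ Suc n) * (\<tau> * inverse q ^ Suc n)))"

definition pint :: "complex \<Rightarrow> (complex \<Rightarrow> complex) \<Rightarrow> qpath \<Rightarrow> complex" where
  "pint q g C = (\<Sum>(a, e)\<leftarrow>C. a * jint q g e)"

definition pconv :: "complex \<Rightarrow> (complex \<Rightarrow> complex) \<Rightarrow> qpath \<Rightarrow> bool" where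
  "pconv q g C = (\<forall>(a, e)\<in>set C. jconv q g e)"

text \<open>Boundary values: [F]_{d[0,tau]} = F(tau) - F(0), [F]_{d[0,tau inf]} = F(tau inf) - F(0),
  with F(0) = lim_{n->+inf} F(tau q^n), F(tau inf) = lim_{n->-inf} F(tau q^n).\<close>
fun bval :: "complex \<Rightarrow> (complex \<Rightarrow> complex) \<Rightarrow> qendpt \<Rightarrow> complex" where
  "bval q F (Fin_pt \<tau>) = F \<tau> - lim (\<lambda>n. F (\<tau> * q ^ n))"
| "bval q F (Inf_pt \<tau>) = lim (\<lambda>n. F (\<tau> * inverse q ^ n)) - lim (\<lambda>n. F (\<tau> * q ^ n))"

fun bexists :: "complex \<Rightarrow> (complex \<Rightarrow> complex) \<Rightarrow> qendpt \<Rightarrow> bool" where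
  "bexists q F (Fin_pt \<tau>) = convergent (\<lambda>n. F (\<tau> * q ^ n))"
| "bexists q F (Inf_pt \<tau>) = (convergent (\<lambda>n. F (\<tau> * inverse q ^ n))
      \<and> convergent (\<lambda>n. F (\<tau> * q ^ n)))"

definition pbound :: "complex \<Rightarrow> (complex \<Rightarrow> complex) \<Rightarrow> qpath \<Rightarrow> complex" where
  "pbound q F C = (\<Sum>(a, e)\<leftarrow>C. a * bval q F e)"

definition pbexists :: "complex \<Rightarrow> (complex \<Rightarrow> complex) \<Rightarrow> qpath \<Rightarrow> bool" where
  "pbexists q F C = (\<forall>(a, e)\<in>set C. bexists q F e)"

text \<open>Pole avoidance: the kernels are finite at all lattice points of C.\<close>
fun lattice_ok :: "complex \<Rightarrow> complex \<Rightarrow> qendpt \<Rightarrow> bool" where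
  "lattice_ok q x (Fin_pt \<tau>) = (\<forall>n::nat. qpoch q (\<tau> * q ^ n / x) \<noteq> 0)"
| "lattice_ok q x (Inf_pt \<tau>) = (\<forall>n::int. qpoch q (\<tau> * q powi n / x) \<noteq> 0)"

text \<open>q-Euler transform E_{lambda;C}[f](x) = x^lambda * int_C f(t) K_lambda(t,x) d_qt,
  where P is the chosen branch of x^lambda.\<close>
definition qEuler :: "complex \<Rightarrow> complex \<Rightarrow> (complex \<Rightarrow> complex) \<Rightarrow> complex \<Rightarrow> qpath
    \<Rightarrow> (complex \<Rightarrow> complex) \<Rightarrow> complex \<Rightarrow> complex" where
  "qEuler q ell P lam C f x = P x * pint q (\<lambda>t. f t * qK q ell lam t x) C"

end

theory Submission
  imports Defs
begin

lemma qpoch_rec: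
  assumes q1: "norm q < 1"
  shows "qpoch q b = (1 - b) * qpoch q (q * b)"
proof -
  let ?f = "\<lambda>k. 1 - b * q ^ k"
  have "summable (\<lambda>k. norm (?f k - 1))"
    using q1 by (simp add: norm_mult norm_power summable_geometric)
  then have "convergent_prod ?f"
    by (intro abs_convergent_prod_imp_convergent_prod summable_imp_abs_convergent_prod)
  from has_prod_ignore_initial_segment'[OF this, of 1]
  have "?f has_prod (?f 0 * (\<Prod>k. ?f (k + 1)))" by simp
  then have "prodinf ?f = ?f 0 * (\<Prod>k. ?f (k + 1))" by (rule has_prod_unique[symmetric])
  moreover have "(\<lambda>k. ?f (k + 1)) = (\<lambda>k. 1 - q * b * q ^ k)" by (auto simp: algebra_simps)
  ultimately show ?thesis by (simp add: qpoch_def)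
qed

lemma qpow_1m:
  assumes "exp ell = q"
  shows "qpow ell (1 - lam) = q * qpow ell (- lam)"
proof -
  have "(1 - lam) * ell = ell + (- lam) * ell" by (simp add: algebra_simps)
  then show ?thesis unfolding qpow_def using assms by (simp only: exp_add)
qed

lemma qK_shift:
  assumes "q \<noteq> 0"
  shows "qK q ell lam t x = qK q ell lam (q * t) (q * x)"
  using assms by (simp add: qK_def)

lemma qK_rel:
  assumes q0: "q \<noteq> 0" and q1: "norm q < 1" and ell: "exp ell = q"
  shows "qK q ell lam t (q * x) = ((1 - qpow ell (- lam) * t / x) / (1 - t / x)) * qK q ell lam t x"
proof -
  have a: "qpow ell (1 - lam) * t / (q * x) = qpow ell (- lam) * t / x"
    using q0 by (simp add: qpow_1m[OF ell])
  have b: "q * t / (q * x) = t / x" using q0 by simp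
  have c: "qpow ell (1 - lam) * t / x = q * (qpow ell (- lam) * t / x)"
    by (simp add: qpow_1m[OF ell])
  have d: "q * t / x = q * (t / x)" by simp
  show ?thesis
    unfolding qK_def a b
    apply (subst qpoch_rec[OF q1, of "qpow ell (- lam) * t / x"])
    apply (subst qpoch_rec[OF q1, of "t / x"])
    unfolding c d by (rule times_divide_times_eq[symmetric])
qed

lemma qK_key:
  assumes q0: "q \<noteq> 0" and q1: "norm q < 1" and ell: "exp ell = q" and x0: "x \<noteq> 0"
    and nz: "qpoch q (t / x) \<noteq> 0"
  shows "qpow ell (- lam) * qK q ell lam t x * t - qK q ell lam t (q * x) * t
         = x * (qK q ell lam t x - qK q ell lam t (q * x))"
proof -
  define c where "c = qpow ell (- lam)"
  define r where "r = (1 - c * t / x) / (1 - t / x)"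
  define K where "K = qK q ell lam t x"
  have n1: "1 - t / x \<noteq> 0"
  proof
    assume "1 - t / x = 0"
    then have "qpoch q (t / x) = 0" by (subst qpoch_rec[OF q1]) simp
    with nz show False by simp
  qed
  have hr: "r * (x - t) = x - c * t"
  proof -
    have "x - t = (1 - t / x) * x" using x0 by (simp add: algebra_simps)
    moreover have "x - c * t = (1 - c * t / x) * x" using x0 by (simp add: algebra_simps)
    ultimately show ?thesis unfolding r_def using n1 x0 by simp
  qed
  have L: "qK q ell lam t (q * x) = r * K"
    unfolding r_def K_def c_def by (rule qK_rel[OF q0 q1 ell])
  have "c * K * t - r * K * t - x * (K - r * K) = K * (r * (x - t) - (x - c * t))"
    by (simp add: algebra_simps)
  then have "c * K * t - r * K * t = x * (K - r * K)" unfolding hr by simp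
  then show ?thesis unfolding L by (simp add: c_def K_def)
qed

lemma T_elem:
  fixes q ell lam x :: complex and f :: "complex \<Rightarrow> complex"
  assumes q0: "q \<noteq> 0" and q1: "norm q < 1"
    and c2: "jconv q (\<lambda>t. f t * qK q ell lam t (q * x)) e"
  shows "jint q (\<lambda>t. qT q f t * qK q ell lam t x) e
     = (1 / q) * jint q (\<lambda>t. f t * qK q ell lam t (q * x)) e
       - ((1 - q) / q) * bval q (\<lambda>t. f t * qK q ell lam t (q * x) * t) e"
proof -
  define h where "h = (\<lambda>t. f t * qK q ell lam t (q * x) * t)"
  have trm: "qT q f t * qK q ell lam t x * t = h (q * t) / q" for t
    unfolding h_def qT_def using q0 qK_shift[OF q0, of ell lam t x] by (simp add: field_simps)
  have pos: "(\<Sum>n. qT q f (\<tau> * q ^ n) * qK q ell lam (\<tau> * q ^ n) x * (\<tau> * q ^ n))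
      = ((\<Sum>n. h (\<tau> * q ^ n)) - h \<tau>) / q"
    if sm: "summable (\<lambda>n. h (\<tau> * q ^ n))" for \<tau>
  proof -
    have "(\<Sum>n. qT q f (\<tau> * q ^ n) * qK q ell lam (\<tau> * q ^ n) x * (\<tau> * q ^ n))
        = (\<Sum>n. h (\<tau> * q ^ Suc n) / q)"
      unfolding trm by (simp add: algebra_simps)
    also have "\<dots> = (\<Sum>n. h (\<tau> * q ^ Suc n)) / q"
      using sm by (intro suminf_divide) (simp only: summable_Suc_iff[where f="\<lambda>n. h (\<tau> * q ^ n)"])
    also have "(\<Sum>n. h (\<tau> * q ^ Suc n)) = (\<Sum>n. h (\<tau> * q ^ n)) - h \<tau>"
      using suminf_split_head[OF sm] by simp
    finally show ?thesis .
  qed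
  have lim0: "lim (\<lambda>n. h (\<tau> * q ^ n)) = 0" if sm: "summable (\<lambda>n. h (\<tau> * q ^ n))" for \<tau>
    using limI[OF summable_LIMSEQ_zero[OF sm]] .
  show ?thesis
  proof (cases e)
    case (Fin_pt \<tau>)
    have sm: "summable (\<lambda>n. h (\<tau> * q ^ n))" using c2 Fin_pt by (simp add: h_def)
    have J1: "jint q (\<lambda>t. qT q f t * qK q ell lam t x) e = (1-q) * (((\<Sum>n. h (\<tau> * q ^ n)) - h \<tau>) / q)"
      using Fin_pt pos[OF sm] by simp
    have J2: "jint q (\<lambda>t. f t * qK q ell lam t (q * x)) e = (1-q) * (\<Sum>n. h (\<tau> * q ^ n))"
      using Fin_pt by (simp add: h_def)
    have B: "bval q h e = h \<tau>" using Fin_pt lim0[OF sm] by simp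
    show ?thesis unfolding h_def[symmetric] J1 J2 B using q0 by (simp add: field_simps)
  next
    case (Inf_pt \<tau>)
    have sm: "summable (\<lambda>n. h (\<tau> * q ^ n))" using c2 Inf_pt by (simp add: h_def)
    have smn: "summable (\<lambda>n. h (\<tau> * inverse q ^ Suc n))" using c2 Inf_pt by (simp add: h_def)
    then have smn': "summable (\<lambda>n. h (\<tau> * inverse q ^ n))"
      by (simp only: summable_Suc_iff[where f="\<lambda>n. h (\<tau> * inverse q ^ n)"])
    have neg: "(\<Sum>n. qT q f (\<tau> * inverse q ^ Suc n) * qK q ell lam (\<tau> * inverse q ^ Suc n) x
          * (\<tau> * inverse q ^ Suc n)) = (h \<tau> + (\<Sum>n. h (\<tau> * inverse q ^ Suc n))) / q"
    proof -
      have e1: "q * (\<tau> * inverse q ^ Suc n) = \<tau> * inverse q ^ n" for n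
        using q0 by (simp add: field_simps)
      have "(\<Sum>n. qT q f (\<tau> * inverse q ^ Suc n) * qK q ell lam (\<tau> * inverse q ^ Suc n) x
          * (\<tau> * inverse q ^ Suc n)) = (\<Sum>n. h (\<tau> * inverse q ^ n) / q)"
        unfolding trm e1 by simp
      also have "\<dots> = (\<Sum>n. h (\<tau> * inverse q ^ n)) / q"
        using smn' by (rule suminf_divide)
      also have "(\<Sum>n. h (\<tau> * inverse q ^ n)) = h \<tau> + (\<Sum>n. h (\<tau> * inverse q ^ Suc n))"
        using suminf_split_head[OF smn'] by simp
      finally show ?thesis .
    qed
    have l1: "lim (\<lambda>n. h (\<tau> * inverse q ^ n)) = 0"
      using limI[OF summable_LIMSEQ_zero[OF smn']] .
    have J1: "jint q (\<lambda>t. qT q f t * qK q ell lam t x) e = (1-q) * (((\<Sum>n. h (\<tau> * q ^ n)) - h \<tau>) / q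
        + (h \<tau> + (\<Sum>n. h (\<tau> * inverse q ^ Suc n))) / q)"
      using Inf_pt pos[OF sm] neg by simp
    have J2: "jint q (\<lambda>t. f t * qK q ell lam t (q * x)) e = (1-q) * ((\<Sum>n. h (\<tau> * q ^ n))
        + (\<Sum>n. h (\<tau> * inverse q ^ Suc n)))"
      using Inf_pt by (simp add: h_def)
    have B: "bval q h e = 0" using Inf_pt lim0[OF sm] l1 by simp
    show ?thesis unfolding h_def[symmetric] J1 J2 B using q0 by (simp add: field_simps)
  qed
qed

lemma D_core:
  fixes q ell lam x :: complex and f :: "complex \<Rightarrow> complex" and w :: "nat \<Rightarrow> complex"
  assumes q0: "q \<noteq> 0" and q1: "norm q < 1" and ell: "exp ell = q" and x0: "x \<noteq> 0"
    and lat: "\<And>n. qpoch q (w n / x) \<noteq> 0"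
    and sD: "summable (\<lambda>n. qD q f (w n) * qK q ell lam (w n) x * w n)"
    and s1: "summable (\<lambda>n. f (w n) * qK q ell lam (w n) x * w n)"
    and s2: "summable (\<lambda>n. f (w n) * qK q ell lam (w n) (q * x) * w n)"
    and tel: "(\<lambda>n. f (w n) * qK q ell lam (w n) (q * x) - f (q * w n) * qK q ell lam (q * w n) (q * x)) sums T"
  shows "(1 - q) * (\<Sum>n. qD q f (w n) * qK q ell lam (w n) x * w n)
     = (qpow ell (- lam) * (1 - q) * (\<Sum>n. f (w n) * qK q ell lam (w n) x * w n)
        - (1 - q) * (\<Sum>n. f (w n) * qK q ell lam (w n) (q * x) * w n)) / ((1 - q) * x) + T"
proof -
  define c where "c = qpow ell (- lam)"
  define K where "K = (\<lambda>t. qK q ell lam t x)"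
  define L where "L = (\<lambda>t. qK q ell lam t (q * x))"
  define F where "F = (\<lambda>t. f t * L t)"
  define sf where "sf = (\<lambda>t. f t * (K t - L t))"
  have qn1: "1 - q \<noteq> 0" using q1 by auto
  have KL: "K t = L (q * t)" for t unfolding K_def L_def using qK_shift[OF q0] by metis
  have dterm: "(1 - q) * (qD q f t * K t * t) = sf t + (F t - F (q * t))" for t
  proof (cases "t = 0")
    case True then show ?thesis by (simp add: qD_def sf_def F_def KL)
  next
    case False
    have e1: "(1 - q) * (a / ((1 - q) * t) * M * t) = a * M" for a M
    proof -
      have "(1 - q) * (a / ((1 - q) * t) * M * t) = (((1 - q) * t) * a / ((1 - q) * t)) * M"
        by (simp add: algebra_simps)
      also have "((1 - q) * t) * a / ((1 - q) * t) = a" using qn1 False by simp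
      finally show ?thesis .
    qed
    show ?thesis unfolding qD_def sf_def F_def KL[of t] e1
      by (simp add: algebra_simps)
  qed
  have sterm: "(c * (f (w n) * K (w n) * w n) - f (w n) * L (w n) * w n) / x = sf (w n)" for n
  proof -
    have "c * K (w n) * w n - L (w n) * w n = x * (K (w n) - L (w n))"
      unfolding c_def K_def L_def by (rule qK_key[OF q0 q1 ell x0 lat])
    then have "c * (f (w n) * K (w n) * w n) - f (w n) * L (w n) * w n = x * sf (w n)"
      unfolding sf_def by (metis (no_types, lifting) mult.assoc mult.commute right_diff_distrib)
    then show ?thesis using x0 by simp
  qed
  have "(\<lambda>n. (c * (f (w n) * K (w n) * w n) - f (w n) * L (w n) * w n) / x) sums
      ((c * (\<Sum>n. f (w n) * K (w n) * w n) - (\<Sum>n. f (w n) * L (w n) * w n)) / x)"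
    using s1 s2 unfolding K_def L_def
    by (intro sums_divide sums_diff sums_mult summable_sums)
  then have "(\<lambda>n. sf (w n)) sums ((c * (\<Sum>n. f (w n) * K (w n) * w n) - (\<Sum>n. f (w n) * L (w n) * w n)) / x)"
    unfolding sterm .
  moreover have tel': "(\<lambda>n. F (w n) - F (q * w n)) sums T" using tel unfolding F_def L_def .
  ultimately have "(\<lambda>n. sf (w n) + (F (w n) - F (q * w n))) sums
     ((c * (\<Sum>n. f (w n) * K (w n) * w n) - (\<Sum>n. f (w n) * L (w n) * w n)) / x + T)"
    by (rule sums_add)
  then
  have A: "(\<lambda>n. (1 - q) * (qD q f (w n) * K (w n) * w n)) sums
     ((c * (\<Sum>n. f (w n) * K (w n) * w n) - (\<Sum>n. f (w n) * L (w n) * w n)) / x + T)"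
    unfolding dterm .
  have B: "(\<lambda>n. (1 - q) * (qD q f (w n) * K (w n) * w n)) sums ((1 - q) * (\<Sum>n. qD q f (w n) * K (w n) * w n))"
    using sD unfolding K_def by (intro sums_mult summable_sums)
  have e2: "(c * (1 - q) * S1 - (1 - q) * S2) / ((1 - q) * x) = (c * S1 - S2) / x" for S1 S2
  proof -
    have "c * (1 - q) * S1 - (1 - q) * S2 = (1 - q) * (c * S1 - S2)" by (simp add: algebra_simps)
    then show ?thesis using qn1 by simp
  qed
  from sums_unique2[OF B A] show ?thesis
    unfolding c_def[symmetric] e2 by (simp add: K_def L_def)
qed

lemma D_elem:
  fixes q ell lam x :: complex and f :: "complex \<Rightarrow> complex"
  assumes q0: "q \<noteq> 0" and q1: "norm q < 1" and ell: "exp ell = q" and x0: "x \<noteq> 0"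
    and lat: "lattice_ok q x e"
    and cD: "jconv q (\<lambda>t. qD q f t * qK q ell lam t x) e"
    and c1: "jconv q (\<lambda>t. f t * qK q ell lam t x) e"
    and c2: "jconv q (\<lambda>t. f t * qK q ell lam t (q * x)) e"
    and bD: "bexists q (\<lambda>t. f t * qK q ell lam t (q * x)) e"
  shows "jint q (\<lambda>t. qD q f t * qK q ell lam t x) e
     = (qpow ell (- lam) * jint q (\<lambda>t. f t * qK q ell lam t x) e
        - jint q (\<lambda>t. f t * qK q ell lam t (q * x)) e) / ((1 - q) * x)
       + bval q (\<lambda>t. f t * qK q ell lam t (q * x)) e"
proof -
  define F where "F = (\<lambda>t. f t * qK q ell lam t (q * x))"
  have qn1: "1 - q \<noteq> 0" using q1 by auto
  note core = D_core[OF q0 q1 ell x0, of _ f]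
  show ?thesis
  proof (cases e)
    case (Fin_pt \<tau>)
    define w where "w = (\<lambda>n::nat. \<tau> * q ^ n)"
    have lw: "qpoch q (w n / x) \<noteq> 0" for n using lat Fin_pt by (simp add: w_def)
    have cv: "convergent (\<lambda>n. F (w n))" using bD Fin_pt by (simp add: w_def F_def)
    have wS: "q * w n = w (Suc n)" for n by (simp add: w_def)
    have tel: "(\<lambda>n. F (w n) - F (q * w n)) sums (F (w 0) - lim (\<lambda>n. F (w n)))"
      unfolding wS by (rule telescope_sums') (use cv in \<open>simp add: convergent_LIMSEQ_iff\<close>)
    have C: "(1 - q) * (\<Sum>n. qD q f (w n) * qK q ell lam (w n) x * w n)
     = (qpow ell (- lam) * (1 - q) * (\<Sum>n. f (w n) * qK q ell lam (w n) x * w n)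
        - (1 - q) * (\<Sum>n. f (w n) * qK q ell lam (w n) (q * x) * w n)) / ((1 - q) * x)
        + (F (w 0) - lim (\<lambda>n. F (w n)))"
      apply (rule core[OF lw])
      using cD c1 c2 Fin_pt tel by (simp_all add: w_def F_def)
    show ?thesis using C Fin_pt by (simp add: w_def F_def mult.assoc)
  next
    case (Inf_pt \<tau>)
    define w where "w = (\<lambda>n::nat. \<tau> * q ^ n)"
    define v where "v = (\<lambda>n::nat. \<tau> * inverse q ^ n)"
    define u where "u = (\<lambda>n::nat. \<tau> * inverse q ^ Suc n)"
    have lw: "qpoch q (w n / x) \<noteq> 0" for n
      using lat Inf_pt by (simp add: w_def) (metis power_int_of_nat)
    have lu: "qpoch q (u n / x) \<noteq> 0" for n
    proof -
      have "q powi (- int (Suc n)) = inverse q ^ Suc n"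
        by (simp only: power_int_minus power_int_of_nat power_inverse)
      then show ?thesis using lat Inf_pt unfolding u_def by (metis lattice_ok.simps(2))
    qed
    have cvw: "convergent (\<lambda>n. F (w n))" using bD Inf_pt by (simp add: w_def F_def)
    have cvv: "convergent (\<lambda>n. F (v n))" using bD Inf_pt by (simp add: v_def F_def)
    have wS: "q * w n = w (Suc n)" for n by (simp add: w_def)
    have uS: "q * u n = v n" "u n = v (Suc n)" for n using q0 by (simp_all add: u_def v_def)
    have telw: "(\<lambda>n. F (w n) - F (q * w n)) sums (F (w 0) - lim (\<lambda>n. F (w n)))"
      unfolding wS by (rule telescope_sums') (use cvw in \<open>simp add: convergent_LIMSEQ_iff\<close>)
    have telu: "(\<lambda>n. F (u n) - F (q * u n)) sums (lim (\<lambda>n. F (v n)) - F (v 0))"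
      unfolding uS(1) unfolding uS(2) by (rule telescope_sums) (use cvv in \<open>simp add: convergent_LIMSEQ_iff\<close>)
    have Cw: "(1 - q) * (\<Sum>n. qD q f (w n) * qK q ell lam (w n) x * w n)
     = (qpow ell (- lam) * (1 - q) * (\<Sum>n. f (w n) * qK q ell lam (w n) x * w n)
        - (1 - q) * (\<Sum>n. f (w n) * qK q ell lam (w n) (q * x) * w n)) / ((1 - q) * x)
        + (F (w 0) - lim (\<lambda>n. F (w n)))"
      apply (rule core[OF lw])
      using cD c1 c2 Inf_pt telw by (simp_all add: w_def F_def)
    have Cu: "(1 - q) * (\<Sum>n. qD q f (u n) * qK q ell lam (u n) x * u n)
     = (qpow ell (- lam) * (1 - q) * (\<Sum>n. f (u n) * qK q ell lam (u n) x * u n)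
        - (1 - q) * (\<Sum>n. f (u n) * qK q ell lam (u n) (q * x) * u n)) / ((1 - q) * x)
        + (lim (\<lambda>n. F (v n)) - F (v 0))"
      apply (rule core[OF lu])
      using cD c1 c2 Inf_pt telu by (simp_all add: u_def F_def)
    have w0: "w 0 = v 0" by (simp add: w_def v_def)
    have J: "jint q g (Inf_pt \<tau>) = (1 - q) * (\<Sum>n. g (w n) * w n) + (1 - q) * (\<Sum>n. g (u n) * u n)" for g
      by (simp add: w_def u_def algebra_simps)
    have Bv: "bval q F e = lim (\<lambda>n. F (v n)) - lim (\<lambda>n. F (w n))"
      using Inf_pt by (simp add: v_def w_def)
    have gen: "\<And>SD SD' S1 S1' S2 S2' A Lw Lv. (1-q)*SD = (c*(1-q)*S1 - (1-q)*S2)/((1-q)*x) + (A - Lw)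
      \<Longrightarrow> (1-q)*SD' = (c*(1-q)*S1' - (1-q)*S2')/((1-q)*x) + (Lv - A)
      \<Longrightarrow> (1-q)*SD + (1-q)*SD' = (c*((1-q)*S1 + (1-q)*S1') - ((1-q)*S2 + (1-q)*S2'))/((1-q)*x) + (Lv - Lw)"
      for c
    proof -
      fix SD SD' S1 S1' S2 S2' A Lw Lv
      assume h1: "(1-q)*SD = (c*(1-q)*S1 - (1-q)*S2)/((1-q)*x) + (A - Lw)"
        and h2: "(1-q)*SD' = (c*(1-q)*S1' - (1-q)*S2')/((1-q)*x) + (Lv - A)"
      have "(c*((1-q)*S1 + (1-q)*S1') - ((1-q)*S2 + (1-q)*S2'))/((1-q)*x)
         = (c*(1-q)*S1 - (1-q)*S2)/((1-q)*x) + (c*(1-q)*S1' - (1-q)*S2')/((1-q)*x)"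
        by (simp add: algebra_simps add_divide_distrib diff_divide_distrib)
      then show "(1-q)*SD + (1-q)*SD' = (c*((1-q)*S1 + (1-q)*S1') - ((1-q)*S2 + (1-q)*S2'))/((1-q)*x) + (Lv - Lw)"
        using h1 h2 by simp
    qed
    show ?thesis unfolding Inf_pt J Bv[unfolded Inf_pt F_def]
      by (rule gen[OF Cw[unfolded F_def] Cu[folded w0, unfolded F_def]])
  qed
qed

lemma list_lin3:
  fixes A B D E :: "qendpt \<Rightarrow> complex"
  assumes "\<forall>(a, e)\<in>set C. A e = \<alpha> * B e + \<beta> * D e + \<gamma> * E e"
  shows "(\<Sum>(a, e)\<leftarrow>C. a * A e) = \<alpha> * (\<Sum>(a, e)\<leftarrow>C. a * B e) + \<beta> * (\<Sum>(a, e)\<leftarrow>C. a * D e)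
     + \<gamma> * (\<Sum>(a, e)\<leftarrow>C. a * E e)"
  using assms by (induction C) (auto simp: algebra_simps)

lemma qpow_add: "qpow ell a * qpow ell b = qpow ell (a + b)"
  unfolding qpow_def by (simp add: distrib_right exp_add)

theorem mainTheorem1:
  fixes q ell lam x :: complex and P f :: "complex \<Rightarrow> complex" and C :: qpath
  assumes q0: "0 < norm q" and q1: "norm q < 1"
    and ell: "exp ell = q"
    and branch: "\<forall>y. y \<noteq> 0 \<longrightarrow> P (q * y) = qpow ell lam * P y"
    and x0: "x \<noteq> 0"
    and poles: "\<forall>(a, e)\<in>set C. lattice_ok q x e"
    and convT: "pconv q (\<lambda>t. qT q f t * qK q ell lam t x) C"
    and convD: "pconv q (\<lambda>t. qD q f t * qK q ell lam t x) C"
    and conv1: "pconv q (\<lambda>t. f t * qK q ell lam t x) C"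
    and conv2: "pconv q (\<lambda>t. f t * qK q ell lam t (q * x)) C"
    and bT: "pbexists q (\<lambda>t. t * ((1 - qpow ell (- lam) * t / x) / (1 - t / x))
               * f t * qK q ell lam t x) C"
    and bD: "pbexists q (\<lambda>t. ((1 - qpow ell (- lam) * t / x) / (1 - t / x))
               * f t * qK q ell lam t x) C"
  shows "(qEuler q ell P lam C (qT q f) x
           = qpow ell (- lam - 1) * qT q (qEuler q ell P lam C f) x
             - P x * ((1 - q) / q) * pbound q (\<lambda>t. t * ((1 - qpow ell (- lam) * t / x) / (1 - t / x))
               * f t * qK q ell lam t x) C)
         \<and> (qEuler q ell P lam C (qD q f) x
           = qpow ell (- lam) * qD q (qEuler q ell P lam C f) x
             + P x * pbound q (\<lambda>t. ((1 - qpow ell (- lam) * t / x) / (1 - t / x))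
               * f t * qK q ell lam t x) C)"
proof -
  have qz: "q \<noteq> 0" using q0 by auto
  have qn1: "1 - q \<noteq> 0" using q1 by auto
  have Pq: "P (q * x) = qpow ell lam * P x" using branch x0 by blast
  have h1: "(\<lambda>t. t * ((1 - qpow ell (- lam) * t / x) / (1 - t / x)) * f t * qK q ell lam t x)
      = (\<lambda>t. f t * qK q ell lam t (q * x) * t)"
    by (rule ext) (simp add: qK_rel[OF qz q1 ell])
  have h2: "(\<lambda>t. ((1 - qpow ell (- lam) * t / x) / (1 - t / x)) * f t * qK q ell lam t x)
      = (\<lambda>t. f t * qK q ell lam t (q * x))"
    by (rule ext) (simp add: qK_rel[OF qz q1 ell])
  have c1: "qpow ell (- lam - 1) * qpow ell lam = 1 / q"
  proof -
    have "qpow ell (- lam - 1) * qpow ell lam = exp ((- lam - 1) * ell + lam * ell)"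
      unfolding qpow_def by (simp only: exp_add)
    also have "(- lam - 1) * ell + lam * ell = - ell" by (simp add: algebra_simps)
    finally show ?thesis using ell by (simp add: exp_minus inverse_eq_divide)
  qed
  have c2: "qpow ell (- lam) * qpow ell lam = 1"
  proof -
    have "qpow ell (- lam) * qpow ell lam = exp ((- lam) * ell + lam * ell)"
      unfolding qpow_def by (simp only: exp_add)
    then show ?thesis by simp
  qed
  have T: "pint q (\<lambda>t. qT q f t * qK q ell lam t x) C
     = (1 / q) * pint q (\<lambda>t. f t * qK q ell lam t (q * x)) C + 0 * pint q (\<lambda>t. 0) C
       + (- ((1 - q) / q)) * pbound q (\<lambda>t. f t * qK q ell lam t (q * x) * t) C"
    unfolding pint_def pbound_def
  proof (rule list_lin3, safe)
    fix a e assume "(a, e) \<in> set C"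
    then have "jconv q (\<lambda>t. f t * qK q ell lam t (q * x)) e" using conv2 by (auto simp: pconv_def)
    from T_elem[OF qz q1 this] show "jint q (\<lambda>t. qT q f t * qK q ell lam t x) e
         = 1 / q * jint q (\<lambda>t. f t * qK q ell lam t (q * x)) e + 0 * jint q (\<lambda>t. 0) e +
           - ((1 - q) / q) * bval q (\<lambda>t. f t * qK q ell lam t (q * x) * t) e" by simp
  qed
  have D: "pint q (\<lambda>t. qD q f t * qK q ell lam t x) C
     = (qpow ell (- lam) / ((1 - q) * x)) * pint q (\<lambda>t. f t * qK q ell lam t x) C
       + (- 1 / ((1 - q) * x)) * pint q (\<lambda>t. f t * qK q ell lam t (q * x)) C
       + 1 * pbound q (\<lambda>t. f t * qK q ell lam t (q * x)) C"
    unfolding pint_def pbound_def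
  proof (rule list_lin3, safe)
    fix a e assume ae: "(a, e) \<in> set C"
    have l: "lattice_ok q x e" using poles ae by auto
    have cD: "jconv q (\<lambda>t. qD q f t * qK q ell lam t x) e" using convD ae by (auto simp: pconv_def)
    have cc1: "jconv q (\<lambda>t. f t * qK q ell lam t x) e" using conv1 ae by (auto simp: pconv_def)
    have cc2: "jconv q (\<lambda>t. f t * qK q ell lam t (q * x)) e" using conv2 ae by (auto simp: pconv_def)
    have bb: "bexists q (\<lambda>t. f t * qK q ell lam t (q * x)) e" using bD ae unfolding h2 by (auto simp: pbexists_def)
    from D_elem[OF qz q1 ell x0 l cD cc1 cc2 bb] show "jint q (\<lambda>t. qD q f t * qK q ell lam t x) e
         = qpow ell (- lam) / ((1 - q) * x) * jint q (\<lambda>t. f t * qK q ell lam t x) e +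
           - 1 / ((1 - q) * x) * jint q (\<lambda>t. f t * qK q ell lam t (q * x)) e +
           1 * bval q (\<lambda>t. f t * qK q ell lam t (q * x)) e"
      by (simp add: diff_divide_distrib)
  qed
  show ?thesis
  proof
    show "qEuler q ell P lam C (qT q f) x
           = qpow ell (- lam - 1) * qT q (qEuler q ell P lam C f) x
             - P x * ((1 - q) / q) * pbound q (\<lambda>t. t * ((1 - qpow ell (- lam) * t / x) / (1 - t / x))
               * f t * qK q ell lam t x) C"
    proof -
      have e: "qpow ell (- lam - 1) * (qpow ell lam * P x * I) = P x * I / q" for I
      proof -
        have "qpow ell (- lam - 1) * (qpow ell lam * P x * I) = (qpow ell (- lam - 1) * qpow ell lam) * (P x * I)"
          by (simp only: ac_simps)
        then show ?thesis using c1 by simp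
      qed
      show ?thesis
        unfolding h1 qEuler_def qT_def[of q "\<lambda>x. P x * _ x"] T Pq e
        by (simp add: algebra_simps)
    qed
  next
    show "qEuler q ell P lam C (qD q f) x
           = qpow ell (- lam) * qD q (qEuler q ell P lam C f) x
             + P x * pbound q (\<lambda>t. ((1 - qpow ell (- lam) * t / x) / (1 - t / x))
               * f t * qK q ell lam t x) C"
    proof -
      have gen: "Px * (qpow ell (- lam) / d * I1 + (- 1 / d) * I2 + 1 * B)
          = qpow ell (- lam) * ((Px * I1 - qpow ell lam * Px * I2) / d) + Px * B" for Px I1 I2 B d
      proof -
        have "qpow ell (- lam) * ((Px * I1 - qpow ell lam * Px * I2) / d)
            = (qpow ell (- lam) * (Px * I1) - (qpow ell (- lam) * qpow ell lam) * (Px * I2)) / d"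
          by (simp add: algebra_simps)
        also have "\<dots> = (qpow ell (- lam) * (Px * I1) - Px * I2) / d" using c2 by simp
        finally show ?thesis by (simp add: algebra_simps add_divide_distrib diff_divide_distrib)
      qed
      show ?thesis
        unfolding h2 qEuler_def unfolding D unfolding qD_def Pq
        by (rule gen)
    qed
  qed
qed

end
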